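(* Let $G$, $k\ge 3$, the choice strings $c_{i,j}$, $L=k+1$ and $d=k-2$ be as in the construction in the context, and let $s$ be a string of length $L$ such that every choice string $c_{i,j}$ ($1\le i<j\le k$) has a substring of length $L$ at Hamming distance at most $d$ from $s$. Then $s$ contains at least two encoding symbols and at least one occurrence of the synchronizing symbol $\#$.
   Context: Let $G=(V,E)$ be an undirected simple graph with $V=\{v_1,\dots,v_n\}$ and edge set $E=\{e_1,\dots,e_m\}$, and let $k\ge 3$ be an integer; put $N=\binom{k}{2}$. The alphabet consists of pairwise distinct symbols: encoding symbols $\sigma_1,\dots,\sigma_n$, string identification symbols $\varphi_1,\dots,\varphi_N$, and a synchronizing symbol $\#$. Order the pairs $(i,j)$ with $1\le i<j\le k$ lexicographically, $(1,2),(1,3),\dots,(1,k),(2,3),\dots,(k-1,k)$, and let $i'$ denote the position of $(i,j)$ in this order. For an edge $e$ joining $v_r$ and $v_s$ with $r<s$ define $\mathrm{block}(i,j,e)=\varphi_{i'}^{\,i-1}\,\sigma_r\,\varphi_{i'}^{\,j-i-1}\,\sigma_s\,\varphi_{i'}^{\,k-j}\,\#$ (a string of length $k+1$), and the choice string $c_{i,j}=\mathrm{block}(i,j,e_1)\,\varphi_{i'}^{\,k}\,\mathrm{block}(i,j,e_2)\,\varphi_{i'}^{\,k}\cdots\varphi_{i'}^{\,k}\,\mathrm{block}(i,j,e_m)$. Set $L=k+1$ and $d=k-2$. *)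

theory Defs
  imports Main
begin

datatype sym = Enc nat | Phi nat | Hash

(* position i' of the pair (i,j) in the lexicographic order of pairs 1 <= a < b <= k *)
definition pidx :: "nat \<Rightarrow> nat \<Rightarrow> nat \<Rightarrow> nat" where
  "pidx k i j = card {(a,b). 1 \<le> a \<and> a < b \<and> b \<le> k \<and> (a < i \<or> (a = i \<and> b \<le> j))}"

definition block :: "nat \<Rightarrow> nat \<Rightarrow> nat \<Rightarrow> nat \<times> nat \<Rightarrow> sym list" where
  "block k i j e = (let p = Phi (pidx k i j) in
     replicate (i - 1) p @ [Enc (fst e)] @ replicate (j - i - 1) p @ [Enc (snd e)]
     @ replicate (k - j) p @ [Hash])"

fun sep_concat :: "'a list \<Rightarrow> 'a list list \<Rightarrow> 'a list" where
  "sep_concat sep [] = []"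
| "sep_concat sep [x] = x"
| "sep_concat sep (x # xs) = x @ sep @ sep_concat sep xs"

definition choice_string :: "nat \<Rightarrow> (nat \<times> nat) list \<Rightarrow> nat \<Rightarrow> nat \<Rightarrow> sym list" where
  "choice_string k es i j =
     sep_concat (replicate k (Phi (pidx k i j))) (map (block k i j) es)"

definition hamming :: "'a list \<Rightarrow> 'a list \<Rightarrow> nat" where
  "hamming xs ys = length (filter (\<lambda>(x,y). x \<noteq> y) (zip xs ys))"

definition has_close_substring :: "nat \<Rightarrow> nat \<Rightarrow> 'a list \<Rightarrow> 'a list \<Rightarrow> bool" where
  "has_close_substring L d s t =
     (\<exists>p. p + L \<le> length t \<and> hamming (take L (drop p t)) s \<le> d)"

definition alphabet :: "nat \<Rightarrow> nat \<Rightarrow> sym set" where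
  "alphabet n k = {Enc r | r. 1 \<le> r \<and> r \<le> n} \<union> {Phi t | t. 1 \<le> t \<and> t \<le> k choose 2} \<union> {Hash}"

fun is_enc :: "sym \<Rightarrow> bool" where
  "is_enc (Enc _) = True" | "is_enc _ = False"

end

theory Submission
  imports Defs
begin

lemma sep_concat_len:
  assumes "\<forall>x\<in>set xs. length x = a" "length sep = b" "xs \<noteq> []"
  shows "length (sep_concat sep xs) + b = length xs * (a + b)"
  using assms
proof (induction sep xs rule: sep_concat.induct)
  case (3 sep x y ys)
  then show ?case by (cases ys) auto
qed auto

lemma sep_concat_nth:
  assumes "\<forall>x\<in>set xs. length x = a" "length sep = b"
    and "q < length (sep_concat sep xs)"
  shows "sep_concat sep xs ! q =
     (if q mod (a+b) < a then xs ! (q div (a+b)) ! (q mod (a+b)) else sep ! (q mod (a+b) - a))"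
  using assms
proof (induction sep xs arbitrary: q rule: sep_concat.induct)
  case (1 sep)
  then show ?case by simp
next
  case (2 sep x)
  then show ?case by (simp add: nth_append)
next
  case (3 sep x y ys)
  show ?case
  proof (cases "q < a + b")
    case True
    have lx: "length x = a" using 3(2) by simp
    have m: "q mod (a+b) = q" "q div (a+b) = 0" using True by simp_all
    show ?thesis
    proof (cases "q < a")
      case True
      then show ?thesis using lx m by (simp add: nth_append)
    next
      case False
      have "q - a < b" using False \<open>q < a + b\<close> by linarith
      with False have "(x @ sep @ sep_concat sep (y # ys)) ! q = sep ! (q - a)"
        using lx \<open>q < a + b\<close> 3(3) by (simp add: nth_append)
      then show ?thesis using lx m False by simp
    qed
  next
    case False
    define q' where "q' = q - (a+b)"
    have q: "q = q' + (a+b)" using False q'_def by simp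
    have "sep_concat sep (x # y # ys) ! q = sep_concat sep (y # ys) ! q'"
      using 3 q by (simp add: nth_append)
    moreover have "q' < length (sep_concat sep (y # ys))" using 3 q by simp
    ultimately show ?thesis using 3(1)[of q'] 3(2,3) q
      by (simp add: mod_add_self2 div_add_self2)
  qed
qed

lemma block_len: "1 \<le> i \<Longrightarrow> i < j \<Longrightarrow> j \<le> k \<Longrightarrow> length (block k i j e) = k + 1"
  by (simp add: block_def Let_def)

lemma block_nth:
  assumes "1 \<le> i" "i < j" "j \<le> k" "r < k + 1"
  shows "block k i j e ! r = (if r = i - 1 then Enc (fst e) else if r = j - 1 then Enc (snd e)
     else if r = k then Hash else Phi (pidx k i j))"
  using assms by (auto simp: block_def Let_def nth_append)

lemma choice_nth:
  assumes "1 \<le> i" "i < j" "j \<le> k" "q < length (choice_string k es i j)"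
  shows "choice_string k es i j ! q = Phi (pidx k i j)
     \<or> (is_enc (choice_string k es i j ! q) \<and> q mod (2*k+1) \<in> {i-1, j-1})
     \<or> (choice_string k es i j ! q = Hash \<and> q mod (2*k+1) = k)"
proof -
  define M where "M = 2*k+1"
  define c where "c = choice_string k es i j"
  define r where "r = q mod M"
  have M: "k+1+k = M" unfolding M_def by simp
  have L: "\<forall>x\<in>set (map (block k i j) es). length x = k+1" using assms block_len by auto
  from sep_concat_nth[OF L, of "replicate k (Phi (pidx k i j))" k q] assms
  have e: "c ! q = (if r < k+1 then map (block k i j) es ! (q div M) ! r
       else replicate k (Phi (pidx k i j)) ! (r - (k+1)))"
    unfolding choice_string_def c_def r_def M by simp
  have rM: "r < M" unfolding r_def M_def by simp
  have "c ! q = Phi (pidx k i j) \<or> (is_enc (c ! q) \<and> r \<in> {i-1, j-1}) \<or> (c ! q = Hash \<and> r = k)"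
  proof (cases "r < k+1")
    case True
    have "q div M < length es"
    proof (rule ccontr)
      assume "\<not> ?thesis"
      hence "length es * M \<le> (q div M) * M" by (meson mult_le_mono1 not_less)
      also have "\<dots> \<le> q" by (rule div_times_less_eq_dividend)
      finally have "length es * M \<le> q" .
      moreover have "es \<noteq> []" using assms(4) by (auto simp: choice_string_def)
      ultimately show False using sep_concat_len[OF L, of "replicate k (Phi (pidx k i j))" k]
        assms(4) unfolding choice_string_def M by simp
    qed
    then have "c ! q = block k i j (es ! (q div M)) ! r"
      using e True by simp
    also have "\<dots> = (if r = i - 1 then Enc (fst (es ! (q div M))) else if r = j - 1 then Enc (snd (es ! (q div M)))
     else if r = k then Hash else Phi (pidx k i j))"
      using block_nth assms True by blast
    finally show ?thesis by auto
  next
    case False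
    have "r - (k+1) < k" using False rM unfolding M_def by linarith
    then have "c ! q = Phi (pidx k i j)" using e False by simp
    then show ?thesis by simp
  qed
  then show ?thesis unfolding c_def r_def M_def .
qed

lemma modinj: "(p+x) mod (M::nat) = (p+y) mod M \<Longrightarrow> x < M \<Longrightarrow> y < M \<Longrightarrow> x = y"
proof (induction x y rule: linorder_wlog)
  case (le a b)
  then have "M dvd (p+b) - (p+a)" using mod_eq_dvd_iff_nat[of "p+a" "p+b" M] by simp
  then have "M dvd b - a" by simp
  moreover have "b - a < M" using le by simp
  ultimately have "b - a = 0" using nat_dvd_not_less by (cases "b - a = 0") auto
  then show ?case using le by simp
next
  case (sym a b) then show ?case by simp
qed

lemma window_props:
  assumes "1 \<le> i" "i < j" "j \<le> k" "p + (k+1) \<le> length (choice_string k es i j)"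
    and w: "w = take (k+1) (drop p (choice_string k es i j))"
  shows "length w = k+1"
    and "\<And>x. x < k+1 \<Longrightarrow> w ! x \<noteq> Phi (pidx k i j) \<Longrightarrow> is_enc (w ! x) \<or> w ! x = Hash"
    and "card {x. x < k+1 \<and> is_enc (w ! x)} \<le> 2"
    and "card {x. x < k+1 \<and> w ! x = Hash} \<le> 1"
proof -
  define c where "c = choice_string k es i j"
  define f where "f = (\<lambda>x. (p+x) mod (2*k+1))"
  have wx: "w ! x = c ! (p + x)" if "x < k+1" for x
    using that assms unfolding c_def by simp
  have P: "c ! (p+x) = Phi (pidx k i j)
     \<or> (is_enc (c ! (p+x)) \<and> f x \<in> {i-1, j-1})
     \<or> (c ! (p+x) = Hash \<and> f x = k)" if "x < k+1" for x
    using choice_nth[OF assms(1-3), of "p+x" es] that assms(4) unfolding c_def f_def by simp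
  have inj: "inj_on f {x. x < k+1 \<and> Q x}" for Q
    unfolding f_def by (rule inj_onI) (rule modinj, auto)
  show "length w = k+1" using assms by simp
  show "\<And>x. x < k+1 \<Longrightarrow> w ! x \<noteq> Phi (pidx k i j) \<Longrightarrow> is_enc (w ! x) \<or> w ! x = Hash"
  proof -
    fix x assume "x < k+1" "w ! x \<noteq> Phi (pidx k i j)"
    then show "is_enc (w ! x) \<or> w ! x = Hash" using P[of x] wx[of x] by auto
  qed
  have E: "f x \<in> {i-1, j-1}" if "x < k+1" "is_enc (w ! x)" for x
    using P[of x] wx[of x] that by auto
  have H: "f x = k" if "x < k+1" "w ! x = Hash" for x
    using P[of x] wx[of x] that by auto
  have "card {x. x < k+1 \<and> is_enc (w ! x)} \<le> card {i-1, j-1}"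
    apply (rule card_inj_on_le[OF inj])
    using E by auto
  also have "\<dots> \<le> 2" by (simp add: card_insert_if)
  finally show "card {x. x < k+1 \<and> is_enc (w ! x)} \<le> 2" .
  have "card {x. x < k+1 \<and> w ! x = Hash} \<le> card {k}"
    apply (rule card_inj_on_le[OF inj])
    using H by auto
  then show "card {x. x < k+1 \<and> w ! x = Hash} \<le> 1" by simp
qed

lemma pidx_mono:
  assumes "1 \<le> i'" "i' < j'" "j' \<le> k" "i < i' \<or> (i = i' \<and> j < j')"
  shows "pidx k i j < pidx k i' j'"
proof -
  define A where "A = {(a, b). 1 \<le> a \<and> a < b \<and> b \<le> k \<and> (a < i \<or> a = i \<and> b \<le> j)}"
  define B where "B = {(a, b). 1 \<le> a \<and> a < b \<and> b \<le> k \<and> (a < i' \<or> a = i' \<and> b \<le> j')}"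
  have fin: "finite B" unfolding B_def
    by (rule finite_subset[of _ "{..k} \<times> {..k}"]) auto
  have sub: "A \<subseteq> B" unfolding A_def B_def using assms by auto
  have "(i',j') \<in> B" unfolding B_def using assms by auto
  moreover have "(i',j') \<notin> A" unfolding A_def using assms by auto
  ultimately have "A \<subset> B" using sub by blast
  then have "card A < card B" using fin psubset_card_mono by blast
  then show ?thesis unfolding pidx_def A_def B_def .
qed

lemma pidx_inj:
  assumes "1 \<le> i" "i < j" "j \<le> k" "1 \<le> i'" "i' < j'" "j' \<le> k" "pidx k i j = pidx k i' j'"
  shows "(i, j) = (i', j')"
proof (rule ccontr)
  assume ne: "(i, j) \<noteq> (i', j')"
  have "(i < i' \<or> (i = i' \<and> j < j')) \<or> (i' < i \<or> (i' = i \<and> j' < j))"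
    using ne by auto
  then show False
  proof
    assume "i < i' \<or> (i = i' \<and> j < j')"
    then have "pidx k i j < pidx k i' j'" using pidx_mono assms(4-6) by blast
    then show False using assms(7) by simp
  next
    assume "i' < i \<or> (i' = i \<and> j' < j)"
    then have "pidx k i' j' < pidx k i j" using pidx_mono assms(1-3) by blast
    then show False using assms(7) by simp
  qed
qed

lemma hamming_card:
  assumes "length w = length s"
  shows "hamming w s = card {x. x < length w \<and> w ! x \<noteq> s ! x}"
  unfolding hamming_def length_filter_conv_card using assms
  by (intro arg_cong[where f=card]) (auto simp: nth_zip)

lemma key:
  fixes s :: "sym list"
  assumes "1 \<le> i" "i < j" "j \<le> k" "length s = k + 1" "k \<ge> 3"
    and "has_close_substring (k + 1) (k - 2) s (choice_string k es i j)"
  shows "3 \<le> card {x. x < k+1 \<and> s ! x = Phi (pidx k i j)}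
      + min (card {x. x < k+1 \<and> is_enc (s ! x)}) 2 + min (card {x. x < k+1 \<and> s ! x = Hash}) 1"
proof -
  obtain p where p: "p + (k+1) \<le> length (choice_string k es i j)"
    and hd: "hamming (take (k+1) (drop p (choice_string k es i j))) s \<le> k - 2"
    using assms(6) unfolding has_close_substring_def by auto
  define w where "w = take (k+1) (drop p (choice_string k es i j))"
  note W = window_props[OF assms(1-3) p w_def]
  define Ag where "Ag = {x. x < k+1 \<and> w ! x = s ! x}"
  define Di where "Di = {x. x < k+1 \<and> w ! x \<noteq> s ! x}"
  have "card Di \<le> k - 2" using hd hamming_card[of w s] W(1) assms(4) unfolding w_def Di_def by simp
  moreover have "card Ag + card Di = k + 1"
  proof -
    have "Ag \<union> Di = {..<k+1}" "Ag \<inter> Di = {}" unfolding Ag_def Di_def by auto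
    then show ?thesis using card_Un_disjoint[of Ag Di] unfolding Ag_def Di_def by simp
  qed
  ultimately have A3: "3 \<le> card Ag" using assms(5) by linarith
  define PS where "PS = {x. x < k+1 \<and> s ! x = Phi (pidx k i j)}"
  define ES where "ES = {x. x < k+1 \<and> is_enc (s ! x)}"
  define HS where "HS = {x. x < k+1 \<and> s ! x = Hash}"
  define EW where "EW = {x. x < k+1 \<and> is_enc (w ! x)}"
  define HW where "HW = {x. x < k+1 \<and> w ! x = Hash}"
  have sub: "Ag \<subseteq> PS \<union> (ES \<inter> EW) \<union> (HS \<inter> HW)"
  proof
    fix x assume "x \<in> Ag"
    then have x: "x < k+1" "w ! x = s ! x" unfolding Ag_def by auto
    show "x \<in> PS \<union> (ES \<inter> EW) \<union> (HS \<inter> HW)"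
    proof (cases "w ! x = Phi (pidx k i j)")
      case True then show ?thesis using x unfolding PS_def by auto
    next
      case False
      then have "is_enc (w ! x) \<or> w ! x = Hash" using W(2) x(1) by blast
      then show ?thesis using x unfolding ES_def EW_def HS_def HW_def by auto
    qed
  qed
  have fins: "finite PS" "finite ES" "finite HS" "finite EW" "finite HW"
    unfolding PS_def ES_def HS_def EW_def HW_def by auto
  have "card Ag \<le> card (PS \<union> (ES \<inter> EW) \<union> (HS \<inter> HW))"
    using sub fins by (intro card_mono) auto
  also have "\<dots> \<le> card PS + card (ES \<inter> EW) + card (HS \<inter> HW)"
    by (metis (no_types, lifting) card_Un_le add_le_mono1 order_trans)
  also have "card (ES \<inter> EW) \<le> min (card ES) 2"
  proof -
    have "card (ES \<inter> EW) \<le> card ES" using fins by (intro card_mono) auto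
    moreover have "card (ES \<inter> EW) \<le> card EW" using fins by (intro card_mono) auto
    ultimately show ?thesis using W(3) unfolding EW_def by simp
  qed
  also have "card (HS \<inter> HW) \<le> min (card HS) 1"
  proof -
    have "card (HS \<inter> HW) \<le> card HS" using fins by (intro card_mono) auto
    moreover have "card (HS \<inter> HW) \<le> card HW" using fins by (intro card_mono) auto
    ultimately show ?thesis using W(4) unfolding HW_def by simp
  qed
  finally show ?thesis using A3 unfolding PS_def ES_def HS_def by simp
qed

lemma sum_bound:
  fixes s :: "sym list"
  assumes "finite T"
  shows "(\<Sum>t\<in>T. card {x. x < k+1 \<and> s ! x = Phi t}) + card {x. x < k+1 \<and> is_enc (s ! x)}
     + card {x. x < k+1 \<and> s ! x = Hash} \<le> k + 1"
proof -
  define U where "U = (\<Union>t\<in>T. {x. x < k+1 \<and> s ! x = Phi t})"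
  define ES where "ES = {x. x < k+1 \<and> is_enc (s ! x)}"
  define HS where "HS = {x. x < k+1 \<and> s ! x = Hash}"
  have fU: "finite U" by (rule finite_subset[of _ "{..<k+1}"]) (auto simp: U_def)
  have "(\<Sum>t\<in>T. card {x. x < k+1 \<and> s ! x = Phi t}) = card U"
    unfolding U_def using assms by (subst card_UN_disjoint) auto
  moreover have "card (U \<union> ES) = card U + card ES"
    by (rule card_Un_disjoint[OF fU]) (auto simp: U_def ES_def)
  moreover have "card (U \<union> ES \<union> HS) = card (U \<union> ES) + card HS"
    using fU by (intro card_Un_disjoint) (auto simp: ES_def HS_def, auto simp: U_def ES_def HS_def)
  moreover have "card (U \<union> ES \<union> HS) \<le> card {..<k+1}"
    by (rule card_mono) (auto simp: U_def ES_def HS_def)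
  ultimately show ?thesis unfolding ES_def HS_def by simp
qed

lemma final_arith:
  fixes k e h :: nat
  assumes "k \<ge> 3" "k * (3 - min e 2 - min h 1) + e + h \<le> k + 1"
  shows "e \<ge> 2 \<and> h \<ge> 1"
proof (rule ccontr)
  assume "\<not> ?thesis"
  then have "min e 2 + min h 1 \<le> 2" "e < 2 \<or> h = 0" by auto
  then have "3 - min e 2 - min h 1 \<ge> 1" by linarith
  consider "e = 0" "h = 0" | "e = 1" "h = 0" | "e \<ge> 2" "h = 0" | "e = 0" "h \<ge> 1" | "e = 1" "h \<ge> 1"
    using \<open>e < 2 \<or> h = 0\<close> by linarith
  then show False
  proof cases
    case 1 then show ?thesis using assms by simp
  next
    case 2 then show ?thesis using assms by simp
  next
    case 3 then have "min e 2 = 2" by simp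
    then show ?thesis using assms 3 by simp
  next
    case 4 then have "min h 1 = 1" by simp
    then show ?thesis using assms 4 by simp
  next
    case 5 then have "min h 1 = 1" by simp
    then show ?thesis using assms 5 by simp
  qed
qed

theorem lemma1:
  fixes n k :: nat and es :: "(nat \<times> nat) list" and s :: "sym list"
  assumes k3: "k \<ge> 3"
    and edges_distinct: "distinct es"
    and edges_ok: "\<forall>(r, t) \<in> set es. 1 \<le> r \<and> r < t \<and> t \<le> n"
    and s_alph: "set s \<subseteq> alphabet n k"
    and s_len: "length s = k + 1"
    and close: "\<forall>i j. 1 \<le> i \<and> i < j \<and> j \<le> k \<longrightarrow>
                   has_close_substring (k + 1) (k - 2) s (choice_string k es i j)"
  shows "length (filter is_enc s) \<ge> 2 \<and> Hash \<in> set s"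
proof -
  define P where "P = (\<lambda>t. card {x. x < k+1 \<and> s ! x = Phi t})"
  define e where "e = card {x. x < k+1 \<and> is_enc (s ! x)}"
  define h where "h = card {x. x < k+1 \<and> s ! x = Hash}"
  define S where "S = insert (2::nat,3::nat) ((\<lambda>j. (1::nat,j)) ` {2..k})"
  define g where "g = (\<lambda>(i,j). pidx k i j)"
  have Sok: "1 \<le> i \<and> i < j \<and> j \<le> k" if "(i,j) \<in> S" for i j
    using that k3 unfolding S_def by auto
  have finS: "finite S" unfolding S_def by simp
  have cardS: "card S = k"
  proof -
    have "(2::nat,3::nat) \<notin> (\<lambda>j. (1::nat,j)) ` {2..k}" by auto
    moreover have "card ((\<lambda>j. (1::nat,j)) ` {2..k}) = k - 1"
      by (subst card_image) (auto simp: inj_on_def)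
    ultimately show ?thesis unfolding S_def using k3 by simp
  qed
  have inj: "inj_on g S"
  proof (rule inj_onI)
    fix a b assume "a \<in> S" "b \<in> S" "g a = g b"
    then show "a = b" unfolding g_def using Sok pidx_inj
      by (cases a, cases b) (metis (mono_tags, lifting) case_prod_conv)
  qed
  have K: "3 \<le> P (g q) + min e 2 + min h 1" if "q \<in> S" for q
  proof -
    obtain i j where q: "q = (i,j)" by (cases q)
    have "1 \<le> i \<and> i < j \<and> j \<le> k" using Sok that q by blast
    then show ?thesis using key[of i j k s es] close s_len k3 q
      unfolding P_def e_def h_def g_def by auto
  qed
  have "k * (3 - min e 2 - min h 1) = (\<Sum>q\<in>S. 3 - min e 2 - min h 1)"
    using cardS by simp
  also have "\<dots> \<le> (\<Sum>q\<in>S. P (g q))"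
    using K by (intro sum_mono) (metis add.assoc le_diff_conv diff_diff_left)
  also have "\<dots> = (\<Sum>t\<in>g ` S. P t)"
    using sum.reindex[OF inj, of P] by simp
  finally have "k * (3 - min e 2 - min h 1) + e + h \<le> k + 1"
    using sum_bound[of "g ` S" k s] finS unfolding P_def e_def h_def by simp
  then have eh: "e \<ge> 2 \<and> h \<ge> 1" using final_arith k3 by blast
  have "length (filter is_enc s) = e"
    unfolding e_def length_filter_conv_card s_len ..
  moreover have "Hash \<in> set s"
  proof -
    have "{x. x < k+1 \<and> s ! x = Hash} \<noteq> {}" using eh unfolding h_def by (metis card.empty not_one_le_zero)
    then obtain x where "x < k+1" "s ! x = Hash" by auto
    then show ?thesis using s_len by (metis nth_mem)
  qed
  ultimately show ?thesis using eh by simp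
qed

end
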